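(* Let $A,B$ be closed linear relations in $X^2$ such that $\{A,B\}$ is a dual pair with $(A^* )_s|_{D(B)}=B_s$ and $(B^* )_s|_{D(A)}=A_s$. Then $$D(A^* )=D(B)\oplus_A N(1+B^*A^* ),\qquad D(B^* )=D(A)\oplus_B N(1+A^*B^* ).$$ In particular, if $A^*=B$ (equivalently $A=B^*$), then $N(1+B^*A^* )=\{0\}$ (equivalently $N(1+A^*B^* )=\{0\}$).
   Context: $X$ is a complex Hilbert space; $X^2=X\times X$ with the product inner product. A linear relation is a linear subspace $T\subset X^2$; $D(T)$, $N(T)=\{x:(x,0)\in T\}$, $T(x)=\{y:(x,y)\in T\}$ as usual. Adjoint: $T^*=\{(f,g):\langle g,x\rangle=\langle f,y\rangle\ \forall (x,y)\in T\}$. For closed $T$: $T_\infty=\{(0,y)\in T\}$, $T_s=T\ominus T_\infty$ is an operator with $D(T_s)=D(T)$, $R(T_s)\subset T(0)^\perp$. A pair of closed relations $\{A,B\}$ is a dual pair if $A\subset B^*$ (equivalently $B\subset A^*$). Product of relations: $CT=\{(x,z):(x,y)\in T,(y,z)\in C\text{ for some }y\}$; $1+T=\{(x,x+y):(x,y)\in T\}$, so $N(1+B^*A^* )=\{g:(g,-g)\in B^*A^*\}$. $X_{+A}$ is $D(A^* )$ with inner product $\langle f,g\rangle_{+A}=\langle f,g\rangle+\langle (A^* )_s f,(A^* )_s g\rangle$ (a Hilbert space), and $\oplus_A$ denotes orthogonal sum in $X_{+A}$; similarly $X_{+B}$, $\oplus_B$ with $B$ in place of $A$. *)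

theory Defs
  imports "HOL-Analysis.Analysis"
begin

text \<open>The library has no complex inner product spaces; we introduce the standard axioms
  (inner product linear in the second, conjugate linear in the first argument; the norm,
  hence the metric and topology, are induced by the inner product).\<close>

class complex_inner = real_normed_vector +
  fixes scaleC :: "complex \<Rightarrow> 'a \<Rightarrow> 'a"
    and cinner :: "'a \<Rightarrow> 'a \<Rightarrow> complex"
  assumes scaleC_add_right: "scaleC a (x + y) = scaleC a x + scaleC a y"
    and scaleC_add_left: "scaleC (a + b) x = scaleC a x + scaleC b x"
    and scaleC_scaleC: "scaleC a (scaleC b x) = scaleC (a * b) x"
    and scaleC_one: "scaleC 1 x = x"
    and scaleR_scaleC: "scaleR r x = scaleC (complex_of_real r) x"
    and cinner_commute: "cinner x y = cnj (cinner y x)"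
    and cinner_add_left: "cinner (x + y) z = cinner x z + cinner y z"
    and cinner_scaleC_left: "cinner (scaleC a x) y = cnj a * cinner x y"
    and cinner_self_real: "Im (cinner x x) = 0"
    and cinner_self_nonneg: "0 \<le> Re (cinner x x)"
    and cinner_eq_zero_iff: "cinner x x = 0 \<longleftrightarrow> x = 0"
    and norm_eq_sqrt_cinner: "norm x = sqrt (Re (cinner x x))"

class chilbert_space = complex_inner + complete_space

definition lin_rel :: "('a::complex_inner \<times> 'a) set \<Rightarrow> bool" where
  "lin_rel T \<longleftrightarrow> (0, 0) \<in> T \<and>
     (\<forall>x y u v. (x, y) \<in> T \<longrightarrow> (u, v) \<in> T \<longrightarrow> (x + u, y + v) \<in> T) \<and>
     (\<forall>c x y. (x, y) \<in> T \<longrightarrow> (scaleC c x, scaleC c y) \<in> T)"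

text \<open>Closed linear relation: closed subspace of \<open>X\<^sup>2\<close> (product topology = topology of
  the product inner product).\<close>
definition closed_lin_rel :: "('a::complex_inner \<times> 'a) set \<Rightarrow> bool" where
  "closed_lin_rel T \<longleftrightarrow> lin_rel T \<and> closed T"

definition dom_rel :: "('a \<times> 'a) set \<Rightarrow> 'a set" where
  "dom_rel T = {x. \<exists>y. (x, y) \<in> T}"

definition ker_rel :: "('a::zero \<times> 'a) set \<Rightarrow> 'a set" where
  "ker_rel T = {x. (x, 0) \<in> T}"

definition mul_rel :: "('a::zero \<times> 'a) set \<Rightarrow> 'a set" where
  "mul_rel T = {y. (0, y) \<in> T}"

definition adj :: "('a::complex_inner \<times> 'a) set \<Rightarrow> ('a \<times> 'a) set" where
  "adj T = {(f, g). \<forall>x y. (x, y) \<in> T \<longrightarrow> cinner g x = cinner f y}"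

text \<open>\<open>T\<^sub>\<infinity> = {(0,y) \<in> T}\<close> and \<open>T\<^sub>s = T \<ominus> T\<^sub>\<infinity>\<close> (orthogonal complement of \<open>T\<^sub>\<infinity>\<close> in \<open>T\<close>
  w.r.t. the product inner product \<open>\<langle>(x,y),(u,v)\<rangle> = \<langle>x,u\<rangle> + \<langle>y,v\<rangle>\<close>).\<close>
definition infpart :: "('a::complex_inner \<times> 'a) set \<Rightarrow> ('a \<times> 'a) set" where
  "infpart T = {(x, y) \<in> T. x = 0}"

definition oppart :: "('a::complex_inner \<times> 'a) set \<Rightarrow> ('a \<times> 'a) set" where
  "oppart T = {(x, y) \<in> T. \<forall>u v. (u, v) \<in> infpart T \<longrightarrow> cinner x u + cinner y v = 0}"

definition restrict_rel :: "('a \<times> 'a) set \<Rightarrow> 'a set \<Rightarrow> ('a \<times> 'a) set" where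
  "restrict_rel T S = {(x, y) \<in> T. x \<in> S}"

text \<open>Product \<open>C T\<close> (first \<open>T\<close>, then \<open>C\<close>) and \<open>1 + T\<close>.\<close>
definition prod_rel :: "('a \<times> 'a) set \<Rightarrow> ('a \<times> 'a) set \<Rightarrow> ('a \<times> 'a) set" where
  "prod_rel C T = {(x, z). \<exists>y. (x, y) \<in> T \<and> (y, z) \<in> C}"

definition one_plus :: "('a::plus \<times> 'a) set \<Rightarrow> ('a \<times> 'a) set" where
  "one_plus T = {(x, x + y) | x y. (x, y) \<in> T}"

text \<open>Inner product of \<open>X\<^sub>+\<^sub>A\<close> on \<open>D(A\<^sup>*)\<close>:
  \<open>\<langle>f,g\<rangle>\<^sub>+\<^sub>A = \<langle>f,g\<rangle> + \<langle>(A\<^sup>*)\<^sub>s f, (A\<^sup>*)\<^sub>s g\<rangle>\<close>, where \<open>(A\<^sup>*)\<^sub>s f\<close> is the (unique) image of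
  \<open>f\<close> under the operator part \<open>(A\<^sup>*)\<^sub>s\<close>.\<close>
definition op_apply :: "('a \<times> 'a) set \<Rightarrow> 'a \<Rightarrow> 'a" where
  "op_apply T x = (THE y. (x, y) \<in> T)"

definition plus_inner :: "('a::complex_inner \<times> 'a) set \<Rightarrow> 'a \<Rightarrow> 'a \<Rightarrow> complex" where
  "plus_inner A f g = cinner f g + cinner (op_apply (oppart (adj A)) f) (op_apply (oppart (adj A)) g)"

definition is_orth_sum :: "('a::complex_inner \<times> 'a) set \<Rightarrow> 'a set \<Rightarrow> 'a set \<Rightarrow> 'a set \<Rightarrow> bool" where
  "is_orth_sum A S M N \<longleftrightarrow>
     S = {u + v | u v. u \<in> M \<and> v \<in> N} \<and> (\<forall>u\<in>M. \<forall>v\<in>N. plus_inner A u v = 0)"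

end

theory Submission
  imports Defs
begin


lemma cinner_add_right: "cinner x (y + z) = cinner x y + cinner (x::'a::complex_inner) z"
  by (metis cinner_commute cinner_add_left complex_cnj_add)

lemma cinner_scaleC_right: "cinner x (scaleC a y) = a * cinner (x::'a::complex_inner) y"
  by (metis cinner_commute cinner_scaleC_left complex_cnj_cnj complex_cnj_mult)

lemma cinner_zero_left [simp]: "cinner 0 (y::'a::complex_inner) = 0"
  by (metis add_0 add_cancel_right_right cinner_add_left)

lemma cinner_zero_right [simp]: "cinner x (0::'a::complex_inner) = 0"
  by (metis cinner_commute cinner_zero_left complex_cnj_zero)

lemma cinner_minus_left: "cinner (- x) y = - cinner (x::'a::complex_inner) y"
  by (metis add.right_inverse add_eq_0_iff cinner_add_left cinner_zero_left)

lemma cinner_minus_right: "cinner x (- y) = - cinner (x::'a::complex_inner) y"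
  by (metis cinner_commute cinner_minus_left complex_cnj_minus)

lemma cinner_diff_left: "cinner (x - y) z = cinner x z - cinner (y::'a::complex_inner) z"
  unfolding diff_conv_add_uminus by (simp only: cinner_add_left cinner_minus_left)

lemma cinner_diff_right: "cinner x (y - z) = cinner x y - cinner (x::'a::complex_inner) z"
  unfolding diff_conv_add_uminus by (simp only: cinner_add_right cinner_minus_right)

lemma scaleC_zero_left [simp]: "scaleC 0 (x::'a::complex_inner) = 0"
  by (metis of_real_0 scaleR_scaleC scaleR_zero_left)

lemma scaleC_minus1: "scaleC (-1) (x::'a::complex_inner) = - x"
  by (metis of_real_1 of_real_minus scaleR_minus1_left scaleR_scaleC)

lemma scaleC_zero_right [simp]: "scaleC a (0::'a::complex_inner) = 0"
  by (metis add_cancel_right_right add_0 scaleC_add_right)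

lemma norm_sq: "(norm x)^2 = Re (cinner x (x::'a::complex_inner))"
  by (simp add: norm_eq_sqrt_cinner cinner_self_nonneg)

lemma cinner_self_eq: "cinner x (x::'a::complex_inner) = complex_of_real ((norm x)^2)"
  by (simp add: norm_sq cinner_self_real complex_eq_iff)

lemma norm_add_sq: "(norm (u + v))^2 = (norm u)^2 + (norm v)^2 + 2 * Re (cinner u (v::'a::complex_inner))"
proof -
  have "Re (cinner v u) = Re (cinner u v)" using cinner_commute[of v u] by simp
  then show ?thesis by (simp add: norm_sq cinner_add_left cinner_add_right)
qed

lemma norm_diff_sq: "(norm (u - v))^2 = (norm u)^2 + (norm v)^2 - 2 * Re (cinner u (v::'a::complex_inner))"
  using norm_add_sq[of u "- v"] by (simp add: cinner_minus_right)

lemma Re_cinner_polar: "Re (cinner u v) = ((norm (u + v))^2 - (norm (u - v))^2) / 4"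
  for u v :: "'a::complex_inner"
  by (simp add: norm_add_sq norm_diff_sq)

lemma Im_cinner_polar: "Im (cinner u v) = - Re (cinner u (scaleC \<i> v))"
  for u v :: "'a::complex_inner"
  by (simp add: cinner_scaleC_right)

lemma cinner_eq_zero_iff': "cinner x x = 0 \<longleftrightarrow> x = (0::'a::complex_inner)"
  by (rule cinner_eq_zero_iff)

instantiation prod :: (complex_inner, complex_inner) complex_inner
begin
definition scaleC_prod_def: "scaleC c x = (scaleC c (fst x), scaleC c (snd x))"
definition cinner_prod_def: "cinner x y = cinner (fst x) (fst y) + cinner (snd x) (snd y)"
instance
proof
  fix a b :: complex and x y z :: "'a \<times> 'b" and r :: real
  show "scaleC a (x + y) = scaleC a x + scaleC a y"
    by (simp add: scaleC_prod_def scaleC_add_right)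
  show "scaleC (a + b) x = scaleC a x + scaleC b x"
    by (simp add: scaleC_prod_def scaleC_add_left)
  show "scaleC a (scaleC b x) = scaleC (a * b) x"
    by (simp add: scaleC_prod_def scaleC_scaleC)
  show "scaleC 1 x = x" by (simp add: scaleC_prod_def scaleC_one)
  show "scaleR r x = scaleC (complex_of_real r) x"
    by (simp add: scaleC_prod_def scaleR_prod_def scaleR_scaleC)
  show "cinner x y = cnj (cinner y x)"
    using cinner_commute[of "fst x" "fst y"] cinner_commute[of "snd x" "snd y"] by (simp add: cinner_prod_def)
  show "cinner (x + y) z = cinner x z + cinner y z"
    by (simp add: cinner_prod_def cinner_add_left)
  show "cinner (scaleC a x) y = cnj a * cinner x y"
    by (simp add: cinner_prod_def scaleC_prod_def cinner_scaleC_left algebra_simps)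
  show "Im (cinner x x) = 0" by (simp add: cinner_prod_def cinner_self_real)
  show "0 \<le> Re (cinner x x)" by (simp add: cinner_prod_def cinner_self_nonneg)
  show "cinner x x = 0 \<longleftrightarrow> x = 0"
  proof
    assume h: "cinner x x = 0"
    have "Re (cinner (fst x) (fst x)) + Re (cinner (snd x) (snd x)) = 0"
      using arg_cong[OF h, of Re] by (simp add: cinner_prod_def)
    then have "Re (cinner (fst x) (fst x)) = 0" "Re (cinner (snd x) (snd x)) = 0"
      using cinner_self_nonneg[of "fst x"] cinner_self_nonneg[of "snd x"] by linarith+
    then have "cinner (fst x) (fst x) = 0" "cinner (snd x) (snd x) = 0"
      by (simp_all add: complex_eq_iff cinner_self_real)
    then show "x = 0" by (simp add: cinner_eq_zero_iff prod_eq_iff)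
  qed (simp add: cinner_prod_def)
  show "norm x = sqrt (Re (cinner x x))"
    by (simp add: norm_prod_def cinner_prod_def norm_sq)
qed
end

instance prod :: (chilbert_space, chilbert_space) chilbert_space ..

lemma scaleC_Pair [simp]: "scaleC c (a, b) = (scaleC c a, scaleC c b)"
  by (simp add: scaleC_prod_def)

lemma cinner_Pair [simp]: "cinner (a, b) (c, d) = cinner a c + cinner b d"
  by (simp add: cinner_prod_def)



lemma cinner_polar: "cinner u v = complex_of_real (((norm (u+v))^2 - (norm (u-v))^2)/4)
   - \<i> * complex_of_real (((norm (u + scaleC \<i> v))^2 - (norm (u - scaleC \<i> v))^2)/4)"
  for u v :: "'a::complex_inner"
proof -
  have "Re (cinner u (scaleC \<i> v)) = - Im (cinner u v)" by (simp add: cinner_scaleC_right)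
  then show ?thesis
    by (simp add: complex_eq_iff Re_cinner_polar[symmetric] Re_cinner_polar[of u "scaleC \<i> v", symmetric])
qed

lemma continuous_on_cinner1:
  assumes "continuous_on S f"
  shows "continuous_on S (\<lambda>z. cinner (f z) (x::'a::complex_inner))"
  unfolding cinner_polar[of "f _" x]
  by (intro continuous_intros assms) auto

definition csub :: "'a::complex_inner set \<Rightarrow> bool" where
  "csub M \<longleftrightarrow> 0 \<in> M \<and> (\<forall>a\<in>M. \<forall>b\<in>M. a + b \<in> M) \<and> (\<forall>c. \<forall>a\<in>M. scaleC c a \<in> M)"

lemma csub_add: "csub M \<Longrightarrow> a \<in> M \<Longrightarrow> b \<in> M \<Longrightarrow> a + b \<in> M"
  by (simp add: csub_def)
lemma csub_scale: "csub M \<Longrightarrow> a \<in> M \<Longrightarrow> scaleC c a \<in> M"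
  by (simp add: csub_def)
lemma csub_zero: "csub M \<Longrightarrow> 0 \<in> M"
  by (simp add: csub_def)
lemma csub_minus: "csub M \<Longrightarrow> a \<in> M \<Longrightarrow> - a \<in> M"
  by (metis csub_scale scaleC_minus1)
lemma csub_diff: "csub M \<Longrightarrow> a \<in> M \<Longrightarrow> b \<in> M \<Longrightarrow> a - b \<in> M"
  by (metis csub_add csub_minus diff_conv_add_uminus)
lemma csub_scaleR: "csub M \<Longrightarrow> a \<in> M \<Longrightarrow> scaleR r a \<in> M"
  by (metis csub_scale scaleR_scaleC)

lemma proj_exists:
  fixes x :: "'a::chilbert_space"
  assumes M: "csub M" and cl: "closed M"
  shows "\<exists>p\<in>M. \<forall>m\<in>M. cinner (x - p) m = 0"
proof -
  define d where "d = Inf ((\<lambda>m. norm (x - m)) ` M)"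
  have ne: "(\<lambda>m. norm (x - m)) ` M \<noteq> {}" using csub_zero[OF M] by blast
  have bdd: "bdd_below ((\<lambda>m. norm (x - m)) ` M)" by (rule bdd_belowI[of _ 0]) auto
  have dle: "d \<le> norm (x - m)" if "m \<in> M" for m
    unfolding d_def using bdd that by (auto intro: cInf_lower)
  have d0: "0 \<le> d" unfolding d_def using ne by (auto intro: cInf_greatest)
  define e :: "nat \<Rightarrow> real" where "e n = inverse (real (Suc n))" for n
  have epos: "0 < e n" for n by (simp add: e_def)
  have ele1: "e n \<le> 1" for n by (simp add: e_def inverse_le_1_iff)
  have emono: "e n \<le> e N" if "N \<le> n" for n N
    using that by (simp add: e_def le_imp_inverse_le)
  have "\<exists>m\<in>M. norm (x - m) < d + e n" for n
  proof -
    have "d < d + e n" using epos[of n] by simp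
    then show ?thesis using cInf_lessD[OF ne, of "d + e n"] unfolding d_def by auto
  qed
  then obtain s where sM: "\<And>n. s n \<in> M" and sd: "\<And>n. norm (x - s n) < d + e n" by metis
  have est: "(norm (s n - s k))^2 \<le> 2 * (d + e n)^2 + 2 * (d + e k)^2 - 4 * d^2" for n k
  proof -
    define a where "a = x - s n"
    define b where "b = x - s k"
    define mid where "mid = scaleR (1/2) (s n + s k)"
    have midM: "mid \<in> M" unfolding mid_def using sM M by (intro csub_scaleR csub_add) auto
    have "a + b = scaleR 2 (x - mid)" unfolding a_def b_def mid_def
      by (simp add: algebra_simps scaleR_2)
    then have "norm (a + b) = 2 * norm (x - mid)" by simp
    then have "(norm (a + b))^2 \<ge> 4 * d^2"
      using dle[OF midM] d0 by (simp add: power_mult_distrib power_mono)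
    moreover have "(norm a)^2 \<le> (d + e n)^2" unfolding a_def
      using sd[of n] by (intro power_mono) auto
    moreover have "(norm b)^2 \<le> (d + e k)^2" unfolding b_def
      using sd[of k] by (intro power_mono) auto
    moreover have "(norm (a - b))^2 + (norm (a + b))^2 = 2 * (norm a)^2 + 2 * (norm b)^2"
      by (simp add: norm_add_sq norm_diff_sq)
    moreover have "a - b = s k - s n" unfolding a_def b_def by simp
    ultimately show ?thesis by (simp add: norm_minus_commute)
  qed
  have "Cauchy s"
  proof (rule CauchyI)
    fix \<epsilon> :: real assume "0 < \<epsilon>"
    then have "0 < \<epsilon>^2 / (8 * d + 4)" using d0 by simp
    then obtain N where N: "inverse (real (Suc N)) < \<epsilon>^2 / (8 * d + 4)"
      using reals_Archimedean by blast
    have eN: "(8 * d + 4) * e N < \<epsilon>^2"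
      using N d0 by (simp add: e_def pos_less_divide_eq mult.commute)
    show "\<exists>M. \<forall>m\<ge>M. \<forall>n\<ge>M. norm (s m - s n) < \<epsilon>"
    proof (intro exI allI impI)
      fix m n assume mN: "N \<le> m" and nN: "N \<le> n"
      have e1: "e m \<le> e N" "e n \<le> e N" using emono mN nN by auto
      have "2 * (d + e m)^2 + 2 * (d + e n)^2 - 4 * d^2
            = 4 * d * e m + 2 * (e m)^2 + 4 * d * e n + 2 * (e n)^2"
        by (simp add: power2_eq_square algebra_simps)
      also have "\<dots> \<le> 4 * d * e N + 2 * e N + 4 * d * e N + 2 * e N"
      proof -
        have "(e m)^2 \<le> e N" using e1 ele1[of m] epos[of m]
          by (smt (verit) mult_left_le power2_eq_square)
        moreover have "(e n)^2 \<le> e N" using e1 ele1[of n] epos[of n]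
          by (smt (verit) mult_left_le power2_eq_square)
        moreover have "4 * d * e m \<le> 4 * d * e N" "4 * d * e n \<le> 4 * d * e N"
          using e1 d0 by (simp_all add: mult_left_mono)
        ultimately show ?thesis by linarith
      qed
      also have "\<dots> = (8 * d + 4) * e N" by (simp add: algebra_simps)
      finally have "(norm (s m - s n))^2 < \<epsilon>^2" using est[of m n] eN by linarith
      then show "norm (s m - s n) < \<epsilon>"
        using \<open>0 < \<epsilon>\<close> by (meson abs_le_square_iff abs_norm_cancel not_le power2_less_imp_less less_imp_le)
    qed
  qed
  then obtain p where lim: "s \<longlonglongrightarrow> p" using Cauchy_convergent_iff convergent_def by blast
  have pM: "p \<in> M" using closed_sequentially[OF cl sM lim] .
  have "norm (x - p) \<le> d"
  proof (rule LIMSEQ_le)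
    show "(\<lambda>n. norm (x - s n)) \<longlonglongrightarrow> norm (x - p)" by (intro tendsto_intros lim)
    show "(\<lambda>n. d + e n) \<longlonglongrightarrow> d"
      unfolding e_def using tendsto_add[OF tendsto_const LIMSEQ_inverse_real_of_nat, of d] by simp
    show "\<exists>N. \<forall>n\<ge>N. norm (x - s n) \<le> d + e n" using sd less_imp_le by blast
  qed
  then have pmin: "norm (x - p) \<le> norm (x - m)" if "m \<in> M" for m using dle[OF that] by linarith
  define r where "r = x - p"
  have reZ: "Re (cinner r m) = 0" if mM: "m \<in> M" for m
  proof -
    have ineq: "2 * t * Re (cinner r m) \<le> t^2 * (norm m)^2" for t
    proof -
      have "p + scaleR t m \<in> M" using pM mM M by (intro csub_add csub_scaleR)
      then have "norm r \<le> norm (r - scaleR t m)" using pmin unfolding r_def by (simp add: algebra_simps)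
      then have "(norm r)^2 \<le> (norm (r - scaleR t m))^2" by (simp add: power_mono)
      also have "\<dots> = (norm r)^2 + t^2 * (norm m)^2 - 2 * t * Re (cinner r m)"
        using norm_diff_sq[of r "scaleR t m"] cinner_scaleC_right[of r "complex_of_real t" m] by (simp add: scaleR_scaleC[symmetric] power_mult_distrib)
      finally show ?thesis by simp
    qed
    show ?thesis
    proof (cases "m = 0")
      case True then show ?thesis by simp
    next
      case False
      then have nm: "(norm m)^2 > 0" by simp
      define q where "q = (norm m)^2"
      define a where "a = Re (cinner r m)"
      have q0: "q > 0" using nm q_def by simp
      have "2 * (a / q) * a \<le> (a / q)^2 * q" using ineq[of "a / q"] unfolding q_def a_def .
      also have "(a / q)^2 * q = a * (a / q)" using q0 by (simp add: power2_eq_square field_simps)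
      finally have "a * (a / q) \<le> 0" by simp
      then have "a * a \<le> 0" using q0 by (simp add: mult_le_0_iff divide_le_0_iff zero_le_divide_iff)
      then have "Re (cinner r m) = 0" unfolding a_def by (auto simp add: mult_le_0_iff)
      then show ?thesis by simp
    qed
  qed
  have "cinner r m = 0" if mM: "m \<in> M" for m
  proof -
    have "scaleC \<i> m \<in> M" using csub_scale[OF M mM] .
    then have "Re (cinner r (scaleC \<i> m)) = 0" by (rule reZ)
    then have "Im (cinner r m) = 0" by (simp add: cinner_scaleC_right)
    then show ?thesis using reZ[OF mM] by (simp add: complex_eq_iff)
  qed
  then show ?thesis using pM unfolding r_def by blast
qed



lemma csub_pair_add: "csub T \<Longrightarrow> (a, b) \<in> T \<Longrightarrow> (c, d) \<in> T \<Longrightarrow> (a + c, b + d) \<in> T"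
  using csub_add[of T "(a, b)" "(c, d)"] by simp
lemma csub_pair_scale: "csub T \<Longrightarrow> (a, b) \<in> T \<Longrightarrow> (scaleC k a, scaleC k b) \<in> T"
  using csub_scale[of T "(a, b)" k] by simp
lemma csub_pair_zero: "csub T \<Longrightarrow> (0, 0) \<in> T"
  using csub_zero[of T] by (simp add: zero_prod_def)

lemma lin_rel_csub: "lin_rel T \<longleftrightarrow> csub (T :: ('a::complex_inner \<times> 'a) set)"
proof
  assume "lin_rel T" then show "csub T" unfolding lin_rel_def csub_def by (auto simp: split_paired_all zero_prod_def)
next
  assume c: "csub T" then show "lin_rel T" unfolding lin_rel_def
    using csub_pair_add[OF c] csub_pair_scale[OF c] csub_pair_zero[OF c] by blast
qed

lemma csub_adj: "csub (adj T)"
  unfolding csub_def adj_def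
  by (auto simp: cinner_add_left cinner_scaleC_left zero_prod_def)

lemma closed_adj: "closed (adj (T :: ('a::complex_inner \<times> 'a) set))"
proof -
  have "adj T = (\<Inter>q\<in>T. {p. cinner (snd p) (fst q) - cinner (fst p) (snd q) = 0})"
    unfolding adj_def by (auto; metis fst_conv snd_conv)
  moreover have "closed {p::'a \<times> 'a. cinner (snd p) (fst q) - cinner (fst p) (snd q) = 0}" for q
    by (intro closed_Collect_eq continuous_on_diff continuous_on_cinner1 continuous_intros)
  ultimately show ?thesis by auto
qed

lemma csub_infpart: assumes c: "csub T" shows "csub (infpart T)"
proof -
  have "0 \<in> infpart T" using csub_pair_zero[OF c] by (simp add: infpart_def zero_prod_def)
  moreover have "a + b \<in> infpart T" if "a \<in> infpart T" "b \<in> infpart T" for a b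
    using that csub_add[OF c, of a b] by (cases a, cases b) (auto simp: infpart_def)
  moreover have "scaleC k a \<in> infpart T" if "a \<in> infpart T" for a k
    using that csub_scale[OF c, of a k] by (cases a) (auto simp: infpart_def)
  ultimately show ?thesis unfolding csub_def by blast
qed

lemma closed_infpart: "closed T \<Longrightarrow> closed (infpart (T :: ('a::complex_inner \<times> 'a) set))"
proof -
  assume "closed T"
  moreover have "infpart T = T \<inter> {p. fst p = 0}" unfolding infpart_def by auto
  moreover have "closed {p::'a \<times> 'a. fst p = 0}"
    by (intro closed_Collect_eq continuous_intros)
  ultimately show ?thesis by auto
qed

lemma oppart_sub: "oppart T \<subseteq> T" unfolding oppart_def by auto

lemma oppart_orth: "(x, y) \<in> oppart T \<Longrightarrow> (0, k) \<in> T \<Longrightarrow> cinner y k = 0"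
  unfolding oppart_def infpart_def by auto

lemma oppart_mem: "(x, y) \<in> oppart T \<longleftrightarrow> (x, y) \<in> T \<and> (\<forall>u v. (u, v) \<in> infpart T \<longrightarrow> cinner x u + cinner y v = 0)"
  unfolding oppart_def by auto

lemma csub_oppart: assumes c: "csub T" shows "csub (oppart T)"
proof -
  have "0 \<in> oppart T" using csub_pair_zero[OF c] by (simp add: oppart_def zero_prod_def)
  moreover have "(x1, y1) + (x2, y2) \<in> oppart T" if h: "(x1, y1) \<in> oppart T" "(x2, y2) \<in> oppart T" for x1 y1 x2 y2
  proof -
    have "(x1 + x2, y1 + y2) \<in> T" using h oppart_sub csub_pair_add[OF c] by blast
    moreover have "cinner (x1 + x2) u + cinner (y1 + y2) v = 0" if "(u, v) \<in> infpart T" for u v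
    proof -
      have "cinner x1 u + cinner y1 v = 0" "cinner x2 u + cinner y2 v = 0"
        using h that unfolding oppart_mem by auto
      then show ?thesis by (simp add: cinner_add_left algebra_simps)
    qed
    ultimately show ?thesis by (auto simp: oppart_mem)
  qed
  moreover have "scaleC k (x, y) \<in> oppart T" if h: "(x, y) \<in> oppart T" for x y k
  proof -
    have "(scaleC k x, scaleC k y) \<in> T" using h oppart_sub csub_pair_scale[OF c] by blast
    moreover have "cinner (scaleC k x) u + cinner (scaleC k y) v = 0" if "(u, v) \<in> infpart T" for u v
    proof -
      have "cinner x u + cinner y v = 0"
        using h that unfolding oppart_mem by auto
      then have "cnj k * (cinner x u + cinner y v) = 0" by simp
      then show ?thesis by (simp add: cinner_scaleC_left algebra_simps)
    qed
    ultimately show ?thesis by (auto simp: oppart_mem)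
  qed
  ultimately show ?thesis unfolding csub_def by auto
qed

lemma oppart_unique:
  assumes T: "csub T" and h1: "(x, y1) \<in> oppart T" and h2: "(x, y2) \<in> oppart T"
  shows "y1 = y2"
proof -
  have "(x, y1) - (x, y2) \<in> T" using h1 h2 T oppart_sub by (intro csub_diff) auto
  then have z: "(0, y1 - y2) \<in> T" by simp
  have "cinner y1 (y1 - y2) = 0" using oppart_orth[OF h1 z] .
  moreover have "cinner y2 (y1 - y2) = 0" using oppart_orth[OF h2 z] .
  ultimately have "cinner (y1 - y2) (y1 - y2) = 0" by (simp add: cinner_diff_left)
  then show ?thesis by (simp add: cinner_eq_zero_iff)
qed

lemma op_apply_eq: "csub T \<Longrightarrow> (x, y) \<in> oppart T \<Longrightarrow> op_apply (oppart T) x = y"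
  unfolding op_apply_def using oppart_unique by blast

lemma decomp:
  fixes T :: "('a::chilbert_space \<times> 'a) set"
  assumes T: "csub T" "closed T" and xy: "(x, y) \<in> T"
  shows "\<exists>y'. (x, y') \<in> oppart T \<and> (0, y - y') \<in> T"
proof -
  obtain q where q: "q \<in> infpart T" and orth: "\<forall>m\<in>infpart T. cinner ((x, y) - q) m = 0"
    using proj_exists[OF csub_infpart[OF T(1)] closed_infpart[OF T(2)], of "(x, y)"] by blast
  obtain w where qw: "q = (0, w)" and wT: "(0, w) \<in> T" using q unfolding infpart_def by auto
  have "(x, y) - (0, w) \<in> T" using T(1) xy wT by (intro csub_diff)
  then have "(x, y - w) \<in> T" by simp
  moreover have "cinner x u + cinner (y - w) v = 0" if "(u, v) \<in> infpart T" for u v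
    using orth that qw by auto
  ultimately have "(x, y - w) \<in> oppart T" unfolding oppart_def by auto
  then show ?thesis using wT by auto
qed

lemma ker_one_plus0: "((x::'a::complex_inner), 0) \<in> one_plus P \<longleftrightarrow> (x, - x) \<in> P"
  unfolding one_plus_def
proof
  assume "(x, 0) \<in> {(x, x + y) |x y. (x, y) \<in> P}"
  then obtain y where "x + y = 0" "(x, y) \<in> P" by auto
  moreover then have "y = - x" using minus_unique[of x y] by simp
  ultimately show "(x, - x) \<in> P" by simp
next
  assume "(x, - x) \<in> P"
  then show "(x, 0) \<in> {(x, x + y) |x y. (x, y) \<in> P}" by force
qed

lemma ker_one_plus: "(x::'a::complex_inner) \<in> ker_rel (one_plus P) \<longleftrightarrow> (x, - x) \<in> P"
  by (simp add: ker_rel_def ker_one_plus0)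

lemma dual_sym: "A \<subseteq> adj B \<Longrightarrow> B \<subseteq> adj A"
  unfolding adj_def by (auto simp: subset_iff) (metis cinner_commute)

lemma part1:
  fixes A B :: "('a::chilbert_space \<times> 'a) set"
  assumes Bc: "closed_lin_rel B" and BA: "B \<subseteq> adj A"
    and R: "restrict_rel (oppart (adj A)) (dom_rel B) = oppart B"
  shows "is_orth_sum A (dom_rel (adj A)) (dom_rel B)
           (ker_rel (one_plus (prod_rel (adj B) (adj A))))"
proof -
  let ?Sa = "oppart (adj A)"
  let ?N = "ker_rel (one_plus (prod_rel (adj B) (adj A)))"
  have Bs: "csub B" "closed B" using Bc unfolding closed_lin_rel_def lin_rel_csub by auto
  have As: "csub (adj A)" "closed (adj A)" by (rule csub_adj, rule closed_adj)
  have oBSa: "(g, z) \<in> ?Sa" if "(g, z) \<in> oppart B" for g z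
    using that R[symmetric] unfolding restrict_rel_def by auto
  have Nchar: "v \<in> ?N \<longleftrightarrow> (\<exists>y. (v, y) \<in> adj A \<and> (y, - v) \<in> adj B)" for v
    unfolding ker_one_plus prod_rel_def by auto
  have sum1: "f \<in> {u + v | u v. u \<in> dom_rel B \<and> v \<in> ?N}" if fD: "f \<in> dom_rel (adj A)" for f
  proof -
    obtain F0 where "(f, F0) \<in> adj A" using fD unfolding dom_rel_def by auto
    then obtain F where fF: "(f, F) \<in> ?Sa" using decomp[OF As] by blast
    obtain pq where pq: "pq \<in> B" and orth: "\<forall>m\<in>B. cinner ((f, F) - pq) m = 0"
      using proj_exists[OF Bs, of "(f, F)"] by blast
    obtain g z where pqgz: "pq = (g, z)" by fastforce
    have gzB: "(g, z) \<in> B" using pq pqgz by simp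
    have orth': "cinner (f - g) u + cinner (F - z) w = 0" if "(u, w) \<in> B" for u w
      using orth that pqgz by auto
    have "(g, z) \<in> oppart B"
    proof -
      have "cinner g u + cinner z w = 0" if "(u, w) \<in> infpart B" for u w
      proof -
        from that have u0: "u = 0" and wB: "(0, w) \<in> B" unfolding infpart_def by auto
        have "cinner (F - z) w = 0" using orth'[OF wB] by simp
        moreover have "cinner F w = 0" using oppart_orth[OF fF] wB BA by auto
        ultimately show ?thesis using u0 by (simp add: cinner_diff_left)
      qed
      then show ?thesis using gzB unfolding oppart_def by auto
    qed
    then have gzSa: "(g, z) \<in> ?Sa" by (rule oBSa)
    define h where "h = f - g"
    have hSa: "(h, F - z) \<in> ?Sa" unfolding h_def
      using csub_diff[OF csub_oppart[OF As(1)] fF gzSa] by simp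
    have "cinner (- h) u = cinner (F - z) w" if "(u, w) \<in> B" for u w
      using orth'[OF that] unfolding h_def by (simp only: cinner_minus_left neg_eq_iff_add_eq_0)
    then have "(F - z, - h) \<in> adj B"
      unfolding adj_def by auto
    then have "h \<in> ?N" using Nchar hSa oppart_sub by blast
    moreover have "g \<in> dom_rel B" using gzB unfolding dom_rel_def by auto
    moreover have "f = g + h" unfolding h_def by simp
    ultimately show ?thesis by blast
  qed
  have sum2: "g + h \<in> dom_rel (adj A)" if gh: "g \<in> dom_rel B" "h \<in> ?N" for g h
  proof -
    obtain z where "(g, z) \<in> B" using gh(1) unfolding dom_rel_def by auto
    then have gz: "(g, z) \<in> adj A" using BA by auto
    obtain y where hy: "(h, y) \<in> adj A" using gh(2) Nchar by blast
    have "(g, z) + (h, y) \<in> adj A" using csub_add[OF As(1) gz hy] .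
    then show ?thesis unfolding dom_rel_def by auto
  qed
  have orth: "plus_inner A u v = 0" if uD: "u \<in> dom_rel B" and vN: "v \<in> ?N" for u v
  proof -
    obtain w0 where "(u, w0) \<in> B" using uD unfolding dom_rel_def by auto
    then obtain w where uw: "(u, w) \<in> oppart B" using decomp[OF Bs] by blast
    then have uwSa: "(u, w) \<in> ?Sa" by (rule oBSa)
    have uwB: "(u, w) \<in> B" using uw oppart_sub by blast
    obtain y where vy: "(v, y) \<in> adj A" and yv: "(y, - v) \<in> adj B" using vN Nchar by blast
    obtain y' where vy': "(v, y') \<in> ?Sa" and d: "(0, y - y') \<in> adj A"
      using decomp[OF As vy] by blast
    have e1: "op_apply ?Sa u = w" using op_apply_eq[OF As(1) uwSa] .
    have e2: "op_apply ?Sa v = y'" using op_apply_eq[OF As(1) vy'] .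
    have "cinner w (y - y') = 0" using oppart_orth[OF uwSa d] .
    then have wy: "cinner w y' = cinner w y" by (simp add: cinner_diff_right)
    have "cinner (- v) u = cinner y w" using yv uwB unfolding adj_def by auto
    then have "cinner y w = - cinner v u" by (simp add: cinner_minus_left)
    then have "cinner w y = - cinner u v"
      by (metis cinner_commute complex_cnj_minus)
    then show ?thesis unfolding plus_inner_def e1 e2 wy by simp
  qed
  show ?thesis unfolding is_orth_sum_def using sum1 sum2 orth by blast
qed



lemma neg_sq_zero:
  fixes v y :: "'a::complex_inner"
  assumes "cinner (- v) v = cinner y y"
  shows "v = 0"
proof -
  have "- ((norm v)^2) = (norm y)^2"
    using arg_cong[OF assms, of Re] by (simp add: cinner_minus_left norm_sq)
  then have "(norm v)^2 = 0" by (smt (verit) zero_le_power2)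
  then show ?thesis by simp
qed

theorem lemma2p2:
  fixes A B :: "('a::chilbert_space \<times> 'a) set"
  assumes "closed_lin_rel A" and "closed_lin_rel B"
    and "A \<subseteq> adj B"
    and "restrict_rel (oppart (adj A)) (dom_rel B) = oppart B"
    and "restrict_rel (oppart (adj B)) (dom_rel A) = oppart A"
  shows "is_orth_sum A (dom_rel (adj A)) (dom_rel B)
           (ker_rel (one_plus (prod_rel (adj B) (adj A))))
       \<and> is_orth_sum B (dom_rel (adj B)) (dom_rel A)
           (ker_rel (one_plus (prod_rel (adj A) (adj B))))
       \<and> (adj A = B \<longrightarrow>
            ker_rel (one_plus (prod_rel (adj B) (adj A))) = {0}
          \<and> ker_rel (one_plus (prod_rel (adj A) (adj B))) = {0})"
proof (intro conjI impI)
  have BA: "B \<subseteq> adj A" using dual_sym[OF assms(3)] .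
  show "is_orth_sum A (dom_rel (adj A)) (dom_rel B)
           (ker_rel (one_plus (prod_rel (adj B) (adj A))))"
    using part1[OF assms(2) BA assms(4)] .
  show "is_orth_sum B (dom_rel (adj B)) (dom_rel A)
           (ker_rel (one_plus (prod_rel (adj A) (adj B))))"
    using part1[OF assms(1) assms(3) assms(5)] .
next
  assume AB: "adj A = B"
  have z: "(0, 0) \<in> adj A" "(0, 0) \<in> adj B" using csub_pair_zero[OF csub_adj] by auto
  show "ker_rel (one_plus (prod_rel (adj B) (adj A))) = {0}"
  proof (rule set_eqI, rule iffI)
    fix v assume "v \<in> ker_rel (one_plus (prod_rel (adj B) (adj A)))"
    then obtain y where vy: "(v, y) \<in> adj A" and yv: "(y, - v) \<in> adj B"
      unfolding ker_one_plus prod_rel_def by auto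
    have "(v, y) \<in> B" using vy AB by simp
    then have "cinner (- v) v = cinner y y" using yv unfolding adj_def by auto
    then show "v \<in> {0}" using neg_sq_zero by auto
  next
    fix v :: 'a assume "v \<in> {0}"
    then show "v \<in> ker_rel (one_plus (prod_rel (adj B) (adj A)))"
      unfolding ker_one_plus prod_rel_def using z by auto
  qed
  show "ker_rel (one_plus (prod_rel (adj A) (adj B))) = {0}"
  proof (rule set_eqI, rule iffI)
    fix v assume "v \<in> ker_rel (one_plus (prod_rel (adj A) (adj B)))"
    then obtain y where vy: "(v, y) \<in> adj B" and yv: "(y, - v) \<in> adj A"
      unfolding ker_one_plus prod_rel_def by auto
    have "(y, - v) \<in> B" using yv AB by simp
    then have "cinner y y = cinner v (- v)" using vy unfolding adj_def by auto
    then have "cinner (- v) v = cinner y y" by (simp add: cinner_minus_left cinner_minus_right)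
    then show "v \<in> {0}" using neg_sq_zero by auto
  next
    fix v :: 'a assume "v \<in> {0}"
    then show "v \<in> ker_rel (one_plus (prod_rel (adj A) (adj B)))"
      unfolding ker_one_plus prod_rel_def using z by auto
  qed
qed

end
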